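(* For the problem $P2\|C_{\max}$ with $n$ jobs, starting from any schedule, the total number of improving iterations (each replacing the current schedule by an improving 2-swap neighbor) before a 2-swap optimal solution is reached is $O(n^4)$.
   Context: Problem $P2\|C_{\max}$: $n$ jobs with processing times $p_j>0$, two identical machines. A schedule $\sigma=(M_1,M_2)$ partitions the jobs into the sets processed on machines 1 and 2; loads $L_i=\sum_{j\in M_i}p_j$, makespan $\max_iL_i$. A 2-swap neighbor is obtained by choosing $k'$ jobs on one machine and $k''$ jobs on the other with $k'+k''\le 2$ and interchanging their machine assignments (so it covers moving one job, moving two jobs, or exchanging two jobs on different machines). It is improving if its makespan is strictly smaller than the current makespan. A schedule is 2-swap optimal if it has no improving 2-swap neighbor. *)

theory Defs
  imports Main "HOL.Real"
begin

text \<open>Jobs are 0..n-1 with processing times p j. A schedule is represented by the set M1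
  of jobs on machine 1; machine 2 gets the remaining jobs {..<n} - M1.\<close>

definition machine2 :: "nat \<Rightarrow> nat set \<Rightarrow> nat set" where
  "machine2 n M1 = {..<n} - M1"

definition makespan :: "(nat \<Rightarrow> real) \<Rightarrow> nat \<Rightarrow> nat set \<Rightarrow> real" where
  "makespan p n M1 = max (\<Sum>j\<in>M1. p j) (\<Sum>j\<in>machine2 n M1. p j)"

definition swap2_neighbor :: "nat \<Rightarrow> nat set \<Rightarrow> nat set \<Rightarrow> bool" where
  "swap2_neighbor n M1 M1' \<longleftrightarrow>
     (\<exists>A B. A \<subseteq> M1 \<and> B \<subseteq> machine2 n M1 \<and> card A + card B \<le> 2 \<and> M1' = (M1 - A) \<union> B)"

definition improving_swap2 :: "(nat \<Rightarrow> real) \<Rightarrow> nat \<Rightarrow> nat set \<Rightarrow> nat set \<Rightarrow> bool" where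
  "improving_swap2 p n M1 M1' \<longleftrightarrow>
     swap2_neighbor n M1 M1' \<and> makespan p n M1' < makespan p n M1"

end

theory Submission
  imports Defs
begin

definition Vs :: "(nat \<Rightarrow> real) \<Rightarrow> nat \<Rightarrow> real set" where
  "Vs p n = ((\<lambda>(a,b). p a + p b) ` ({..<n} \<times> {..<n})) \<union> (p ` {..<n})
            \<union> ((\<lambda>(a,b). p a - p b) ` ({..<n} \<times> {..<n}))"

definition Nf :: "(nat \<Rightarrow> real) \<Rightarrow> nat \<Rightarrow> real \<Rightarrow> nat" where
  "Nf p n D = card {v \<in> Vs p n. 0 < v \<and> v < D}"

definition wt :: "(nat \<Rightarrow> real) \<Rightarrow> nat \<Rightarrow> nat \<Rightarrow> nat" where
  "wt p n x = card {c \<in> {..<n}. p c \<le> p x}"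

definition Rw :: "(nat \<Rightarrow> real) \<Rightarrow> nat \<Rightarrow> nat set \<Rightarrow> nat" where
  "Rw p n H = (\<Sum>x\<in>H. wt p n x)"

definition heavy :: "(nat \<Rightarrow> real) \<Rightarrow> nat \<Rightarrow> nat set \<Rightarrow> nat set" where
  "heavy p n M = (if sum p (machine2 n M) \<le> sum p M then M else machine2 n M)"

definition Pot :: "(nat \<Rightarrow> real) \<Rightarrow> nat \<Rightarrow> nat set \<Rightarrow> nat" where
  "Pot p n M = Nf p n \<bar>sum p M - sum p (machine2 n M)\<bar> * (n^2+1) + Rw p n (heavy p n M)"

lemma finite_Vs: "finite (Vs p n)"
  unfolding Vs_def by auto

lemma card_Vs: "card (Vs p n) \<le> 2*n*n + n"
proof -
  have "card (Vs p n) \<le> card ((\<lambda>(a,b). p a + p b) ` ({..<n} \<times> {..<n})) + card (p ` {..<n})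
            + card ((\<lambda>(a,b). p a - p b) ` ({..<n} \<times> {..<n}))"
    unfolding Vs_def by (meson card_Un_le le_trans add_le_mono order_refl)
  also have "\<dots> \<le> n*n + n + n*n"
  proof -
    have "card ((\<lambda>(a,b). p a + p b) ` ({..<n} \<times> {..<n})) \<le> n*n"
      using card_image_le[of "{..<n} \<times> {..<n}" "\<lambda>(a,b). p a + p b"] by (simp add: card_cartesian_product)
    moreover have "card ((\<lambda>(a,b). p a - p b) ` ({..<n} \<times> {..<n})) \<le> n*n"
      using card_image_le[of "{..<n} \<times> {..<n}" "\<lambda>(a,b). p a - p b"] by (simp add: card_cartesian_product)
    moreover have "card (p ` {..<n}) \<le> n"
      using card_image_le[of "{..<n}" p] by simp
    ultimately show ?thesis by linarith
  qed
  finally show ?thesis by simp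
qed

lemma Nf_le: "Nf p n D \<le> 2*n*n + n"
  unfolding Nf_def by (rule order_trans[OF card_mono[OF finite_Vs] card_Vs]) auto

lemma wt_le: "wt p n x \<le> n"
proof -
  have "{c \<in> {..<n}. p c \<le> p x} \<subseteq> {..<n}" by blast
  then have "card {c \<in> {..<n}. p c \<le> p x} \<le> card {..<n::nat}" by (intro card_mono) simp_all
  then show ?thesis unfolding wt_def by simp
qed
lemma wt_pos: "a < n \<Longrightarrow> 0 < wt p n a"
proof -
  assume "a < n"
  then have "a \<in> {c \<in> {..<n}. p c \<le> p a}" by simp
  then have "{c \<in> {..<n}. p c \<le> p a} \<noteq> {}" by blast
  then show ?thesis unfolding wt_def by (simp add: card_gt_0_iff)
qed
lemma wt_less: "a < n \<Longrightarrow> p b < p a \<Longrightarrow> wt p n b < wt p n a"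
proof -
  assume a: "a < n" "p b < p a"
  have "{c \<in> {..<n}. p c \<le> p b} \<subset> {c \<in> {..<n}. p c \<le> p a}"
  proof
    show "{c \<in> {..<n}. p c \<le> p b} \<subseteq> {c \<in> {..<n}. p c \<le> p a}" using a by auto
    show "{c \<in> {..<n}. p c \<le> p b} \<noteq> {c \<in> {..<n}. p c \<le> p a}" 
    proof -
      have "a \<in> {c \<in> {..<n}. p c \<le> p a}" using a by simp
      moreover have "a \<notin> {c \<in> {..<n}. p c \<le> p b}" using a by simp
      ultimately show ?thesis by blast
    qed
  qed
  then show ?thesis unfolding wt_def by (intro psubset_card_mono) simp_all
qed

lemma Rw_le: "H \<subseteq> {..<n} \<Longrightarrow> Rw p n H \<le> n*n"
proof -
  assume H: "H \<subseteq> {..<n}"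
  have "Rw p n H \<le> (\<Sum>x\<in>H. n)" unfolding Rw_def by (rule sum_mono) (rule wt_le)
  also have "\<dots> = card H * n" by simp
  also have "\<dots> \<le> n * n" using card_mono[OF _ H] by simp
  finally show ?thesis .
qed

lemma Vs1: "a < n \<Longrightarrow> p a \<in> Vs p n"
  unfolding Vs_def by (intro UnI1 UnI2 imageI) simp
lemma Vs2: "a < n \<Longrightarrow> b < n \<Longrightarrow> p a + p b \<in> Vs p n"
proof -
  assume "a < n" "b < n"
  then have "(a,b) \<in> {..<n} \<times> {..<n}" by simp
  then have "(\<lambda>(a,b). p a + p b) (a,b) \<in> (\<lambda>(a,b). p a + p b) ` ({..<n} \<times> {..<n})" by (rule imageI)
  then show ?thesis unfolding Vs_def by (intro UnI1) simp
qed
lemma Vs3: "a < n \<Longrightarrow> b < n \<Longrightarrow> p a - p b \<in> Vs p n"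
proof -
  assume "a < n" "b < n"
  then have "(a,b) \<in> {..<n} \<times> {..<n}" by simp
  then have "(\<lambda>(a,b). p a - p b) (a,b) \<in> (\<lambda>(a,b). p a - p b) ` ({..<n} \<times> {..<n})" by (rule imageI)
  then show ?thesis unfolding Vs_def by (intro UnI2) simp
qed

lemma generic_step:
  fixes p :: "nat \<Rightarrow> real"
  assumes XY: "X \<union> Y = {..<n}" "X \<inter> Y = {}"
    and heavyX: "sum p Y \<le> sum p X"
    and AB: "A \<subseteq> X" "B \<subseteq> Y" "card A + card B \<le> 2"
    and X': "X' = (X - A) \<union> B" and Y': "Y' = (Y - B) \<union> A"
    and impr: "max (sum p X') (sum p Y') < sum p X"
    and H': "H' \<in> {X', Y'}" "sum p Y' < sum p X' \<Longrightarrow> H' = X'"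
    and pos: "\<forall>j<n. 0 < p j"
  shows "Nf p n \<bar>sum p X' - sum p Y'\<bar> * (n^2+1) + Rw p n H'
         < Nf p n (sum p X - sum p Y) * (n^2+1) + Rw p n X"
proof -
  have fX: "finite X" and fY: "finite Y" using XY(1) by (metis finite_Un finite_lessThan)+
  have fA: "finite A" and fB: "finite B" using AB fX fY finite_subset by blast+
  have dAB: "A \<inter> B = {}" using AB XY by blast
  have sX': "sum p X' = sum p X - sum p A + sum p B"
  proof -
    have "sum p X' = sum p (X - A) + sum p B"
      unfolding X' using AB XY fX fB by (intro sum.union_disjoint) auto
    moreover have "sum p (X - A) = sum p X - sum p A" using AB fX by (simp add: sum_diff)
    ultimately show ?thesis by simp
  qed
  have sY': "sum p Y' = sum p Y - sum p B + sum p A"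
  proof -
    have "sum p Y' = sum p (Y - B) + sum p A"
      unfolding Y' using AB XY fY fA by (intro sum.union_disjoint) auto
    moreover have "sum p (Y - B) = sum p Y - sum p B" using AB fY by (simp add: sum_diff)
    ultimately show ?thesis by simp
  qed
  define t where "t = sum p A - sum p B"
  define D where "D = sum p X - sum p Y"
  have tpos: "0 < t" using impr sX' unfolding t_def by simp
  have tD: "t < D" using impr sY' unfolding t_def D_def by simp
  have An: "A \<subseteq> {..<n}" "B \<subseteq> {..<n}" using AB XY by auto
  have "0 \<le> sum p B" using An pos by (intro sum_nonneg) (auto simp: less_imp_le)
  then have Ane: "A \<noteq> {}" using tpos unfolding t_def by auto
  have cases_AB: "(\<exists>a. A = {a} \<and> B = {}) \<or> (\<exists>a b. A = {a,b} \<and> a \<noteq> b \<and> B = {})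
       \<or> (\<exists>a b. A = {a} \<and> B = {b})"
  proof -
    have "card A \<ge> 1" using Ane fA by (simp add: Suc_le_eq card_gt_0_iff)
    then consider "card A = 1" "card B = 0" | "card A = 2" "card B = 0" | "card A = 1" "card B = 1"
      using AB(3) by linarith
    then show ?thesis
    proof cases
      case 1 then show ?thesis using fB by (auto simp: card_1_singleton_iff)
    next
      case 2 then show ?thesis using fB by (auto simp: card_2_iff)
    next
      case 3 then show ?thesis by (auto simp: card_1_singleton_iff)
    qed
  qed
  have tV: "t \<in> Vs p n"
    using cases_AB
  proof (elim disjE exE conjE)
    fix a assume "A = {a}" "B = {}"
    then show ?thesis unfolding t_def using An Vs1[of a n p] by simp
  next
    fix a b assume "A = {a,b}" "a \<noteq> b" "B = {}"
    then show ?thesis unfolding t_def using An Vs2[of a n b p] by simp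
  next
    fix a b assume "A = {a}" "B = {b}"
    then show ?thesis unfolding t_def using An Vs3[of a n b p] by simp
  qed
  have "X' \<subseteq> {..<n}" "Y' \<subseteq> {..<n}" unfolding X' Y' using XY AB by blast+
  then have Hn: "H' \<subseteq> {..<n}" using H'(1) by blast
  show ?thesis
  proof (cases "sum p Y' < sum p X'")
    case True
    have HX: "H' = X'" using H'(2) True .
    have Dle: "\<bar>sum p X' - sum p Y'\<bar> \<le> D" using True impr sX' sY' tpos unfolding D_def t_def by simp
    have N1: "Nf p n \<bar>sum p X' - sum p Y'\<bar> \<le> Nf p n D"
      unfolding Nf_def using Dle by (intro card_mono) (auto simp: finite_Vs)
    have R1: "Rw p n X' + Rw p n A = Rw p n X + Rw p n B"
    proof -
      have "Rw p n X' = Rw p n (X - A) + Rw p n B"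
        unfolding Rw_def X' using AB XY fX fB by (intro sum.union_disjoint) auto
      moreover have "Rw p n (X - A) + Rw p n A = Rw p n X"
        unfolding Rw_def using AB fX by (metis sum.subset_diff add.commute)
      ultimately show ?thesis by simp
    qed
    have R2: "Rw p n B < Rw p n A"
      using cases_AB
    proof (elim disjE exE conjE)
      fix a assume "A = {a}" "B = {}" then show ?thesis using An wt_pos unfolding Rw_def by auto
    next
      fix a b assume "A = {a,b}" "a \<noteq> b" "B = {}" then show ?thesis using An wt_pos unfolding Rw_def by auto
    next
      fix a b assume ab: "A = {a}" "B = {b}"
      then have "p b < p a" using tpos unfolding t_def by simp
      then show ?thesis using ab An wt_less unfolding Rw_def by auto
    qed
    have "Rw p n H' < Rw p n X" using R1 R2 unfolding HX by linarith
    moreover have "Nf p n \<bar>sum p X' - sum p Y'\<bar> * (n^2+1) \<le> Nf p n D * (n^2+1)"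
      using N1 by (rule mult_le_mono1)
    ultimately show ?thesis unfolding D_def by linarith
  next
    case False
    have Dlt: "\<bar>sum p X' - sum p Y'\<bar> < t" using False tD sX' sY' unfolding D_def t_def by simp
    have "{v \<in> Vs p n. 0 < v \<and> v < \<bar>sum p X' - sum p Y'\<bar>} \<subset> {v \<in> Vs p n. 0 < v \<and> v < D}"
    proof
      show "{v \<in> Vs p n. 0 < v \<and> v < \<bar>sum p X' - sum p Y'\<bar>} \<subseteq> {v \<in> Vs p n. 0 < v \<and> v < D}"
        using Dlt tD by auto
      have "t \<in> {v \<in> Vs p n. 0 < v \<and> v < D}" using tV tpos tD by simp
      moreover have "t \<notin> {v \<in> Vs p n. 0 < v \<and> v < \<bar>sum p X' - sum p Y'\<bar>}" using Dlt by simp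
      ultimately show "{v \<in> Vs p n. 0 < v \<and> v < \<bar>sum p X' - sum p Y'\<bar>} \<noteq> {v \<in> Vs p n. 0 < v \<and> v < D}" by blast
    qed
    then have N1: "Nf p n \<bar>sum p X' - sum p Y'\<bar> < Nf p n D"
      unfolding Nf_def by (intro psubset_card_mono) (auto simp: finite_Vs)
    have R: "Rw p n H' \<le> n*n" using Rw_le[OF Hn] .
    have "Nf p n \<bar>sum p X' - sum p Y'\<bar> * (n^2+1) + n*n < Nf p n D * (n^2+1)"
    proof -
      have "Suc (Nf p n \<bar>sum p X' - sum p Y'\<bar>) * (n^2+1) \<le> Nf p n D * (n^2+1)"
        using N1 by (intro mult_le_mono1) simp
      then show ?thesis by (simp add: power2_eq_square)
    qed
    then show ?thesis using R unfolding D_def by linarith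
  qed
qed


lemma step:
  fixes p :: "nat \<Rightarrow> real"
  assumes M: "M \<subseteq> {..<n}" and pos: "\<forall>j<n. 0 < p j"
    and imp: "improving_swap2 p n M M'"
  shows "M' \<subseteq> {..<n} \<and> Pot p n M' < Pot p n M"
proof -
  obtain A B where AB: "A \<subseteq> M" "B \<subseteq> machine2 n M" "card A + card B \<le> 2"
    and M': "M' = (M - A) \<union> B"
    using imp unfolding improving_swap2_def swap2_neighbor_def by blast
  have mk: "makespan p n M' < makespan p n M" using imp unfolding improving_swap2_def by blast
  have M'n: "M' \<subseteq> {..<n}" using M' AB M unfolding machine2_def by auto
  have m2: "machine2 n M' = (machine2 n M - B) \<union> A" using M' AB M unfolding machine2_def by auto
  have XY: "M \<union> machine2 n M = {..<n}" "M \<inter> machine2 n M = {}" using M unfolding machine2_def by auto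
  have "Pot p n M' < Pot p n M"
  proof (cases "sum p (machine2 n M) \<le> sum p M")
    case True
    have hM: "heavy p n M = M" using True unfolding heavy_def by simp
    have "Nf p n \<bar>sum p M' - sum p (machine2 n M')\<bar> * (n^2+1) + Rw p n (heavy p n M')
         < Nf p n (sum p M - sum p (machine2 n M)) * (n^2+1) + Rw p n M"
      apply (rule generic_step[OF XY True AB M' m2 _ _ _ pos])
      using mk True unfolding makespan_def heavy_def by auto
    then show ?thesis unfolding Pot_def hM using True by simp
  next
    case False
    have hM: "heavy p n M = machine2 n M" using False unfolding heavy_def by simp
    have XY2: "machine2 n M \<union> M = {..<n}" "machine2 n M \<inter> M = {}" using XY by auto
    have "Nf p n \<bar>sum p (machine2 n M') - sum p M'\<bar> * (n^2+1) + Rw p n (heavy p n M')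
         < Nf p n (sum p (machine2 n M) - sum p M) * (n^2+1) + Rw p n (machine2 n M)"
      apply (rule generic_step[OF XY2 _ AB(2) AB(1) _ m2 M' _ _ _ pos])
      using mk False AB(3) unfolding makespan_def heavy_def by auto
    then show ?thesis unfolding Pot_def hM using False by (simp add: abs_minus_commute)
  qed
  then show ?thesis using M'n by simp
qed

lemma Pot_bound:
  assumes M: "M \<subseteq> {..<n}"
  shows "Pot p n M \<le> 7 * n^4"
proof (cases "n = 0")
  case True
  then have "M = {}" using M by auto
  then show ?thesis using True unfolding Pot_def Nf_def Vs_def heavy_def machine2_def Rw_def by simp
next
  case False
  have h: "heavy p n M \<subseteq> {..<n}" using M unfolding heavy_def machine2_def by auto
  have "Pot p n M \<le> (2*n*n + n) * (n^2+1) + n*n"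
    unfolding Pot_def by (intro add_mono mult_le_mono1 Nf_le Rw_le h)
  also have "\<dots> \<le> (3*n*n) * (2*n*n) + n*n*n*n"
  proof -
    have a: "2*n*n + n \<le> 3*n*n" using False by (simp add: mult_le_mono)
    have b: "n^2+1 \<le> 2*n*n" using False by (simp add: power2_eq_square)
    have c: "n*n \<le> n*n*n*n" using False by simp
    show ?thesis using add_mono[OF mult_le_mono[OF a b] c] .
  qed
  also have "\<dots> = 7 * n^4" by (simp add: power4_eq_xxxx)
  finally show ?thesis .
qed

theorem theorem4:
  "\<exists>C::nat. \<forall>(n::nat) (p::nat \<Rightarrow> real) (\<sigma>::nat \<Rightarrow> nat set) (k::nat).
     (\<forall>j<n. p j > 0) \<longrightarrow> \<sigma> 0 \<subseteq> {..<n} \<longrightarrow>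
     (\<forall>i<k. improving_swap2 p n (\<sigma> i) (\<sigma> (Suc i))) \<longrightarrow>
     k \<le> C * n ^ 4"
proof (intro exI[of _ 7] allI impI)
  fix n :: nat and p :: "nat \<Rightarrow> real" and \<sigma> :: "nat \<Rightarrow> nat set" and k :: nat
  assume pos: "\<forall>j<n. p j > 0" and s0: "\<sigma> 0 \<subseteq> {..<n}"
    and imp: "\<forall>i<k. improving_swap2 p n (\<sigma> i) (\<sigma> (Suc i))"
  have "i \<le> k \<longrightarrow> \<sigma> i \<subseteq> {..<n} \<and> Pot p n (\<sigma> i) + i \<le> Pot p n (\<sigma> 0)" for i
  proof (induction i)
    case 0 then show ?case using s0 by simp
  next
    case (Suc i)
    show ?case
    proof
      assume "Suc i \<le> k"
      then have "i < k" "i \<le> k" by auto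
      then have IH: "\<sigma> i \<subseteq> {..<n}" "Pot p n (\<sigma> i) + i \<le> Pot p n (\<sigma> 0)" using Suc by auto
      have "\<sigma> (Suc i) \<subseteq> {..<n} \<and> Pot p n (\<sigma> (Suc i)) < Pot p n (\<sigma> i)"
        using step[OF IH(1) pos] imp \<open>i < k\<close> by blast
      then show "\<sigma> (Suc i) \<subseteq> {..<n} \<and> Pot p n (\<sigma> (Suc i)) + Suc i \<le> Pot p n (\<sigma> 0)"
        using IH(2) by linarith
    qed
  qed
  then have "k \<le> Pot p n (\<sigma> 0)" by (metis le_add2 le_refl order_trans)
  also have "\<dots> \<le> 7 * n^4" using Pot_bound[OF s0] .
  finally show "k \<le> 7 * n^4" .
qed

end
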